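(* Let $n$ be a positive odd integer. Then $$ \sum_{k=0}^{n-1}\frac{(aq;q^2)_k\,(q/a;q^2)_k}{(q^2;q^2)_k^2}\,q^{2k} \equiv (-1)^{(n-1)/2}q^{(n^2-1)/4}\pmod{(1-aq^n)(a-q^n)}. $$
   Context: $a,q$ are indeterminates. The $q$-shifted factorial is $(y;q)_0=1$ and $(y;q)_m=(1-y)(1-yq)\cdots(1-yq^{m-1})$ for $m\geqslant1$. For rational functions $A,B$ and a polynomial $P$, $A\equiv B\pmod P$ means $A-B=P\cdot C/D$ for polynomials $C,D$ with $D$ coprime to $P$. *)

theory Defs
  imports "HOL-Computational_Algebra.Computational_Algebra"
begin

text \<open>Bivariate polynomials over the rationals: the outer variable is a, the inner
  (coefficient) variable is q.  Rational functions in a, q are elements of the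
  fraction field of this polynomial ring.\<close>

type_synonym bipoly = "rat poly poly"
type_synonym ratfun = "bipoly fract"

definition var_a :: bipoly where "var_a = [:0, 1:]"
definition var_q :: bipoly where "var_q = [:[:0, 1:]:]"

definition fa :: ratfun where "fa = to_fract var_a"
definition fq :: ratfun where "fq = to_fract var_q"

definition qpoch :: "ratfun \<Rightarrow> ratfun \<Rightarrow> nat \<Rightarrow> ratfun" where
  "qpoch y p m = (\<Prod>j<m. 1 - y * p ^ j)"

definition qcong :: "ratfun \<Rightarrow> ratfun \<Rightarrow> bipoly \<Rightarrow> bool" where
  "qcong A B P \<longleftrightarrow> (\<exists>C D. D \<noteq> 0 \<and> coprime D P \<and>
      A - B = to_fract P * to_fract C / to_fract D)"

end

theory Submission
  imports Defs "HOL-Computational_Algebra.Field_as_Ring"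
begin

locale qf =
  fixes q :: "'a::field"
  assumes q0: "q \<noteq> 0" and qn1: "\<And>i. i > 0 \<Longrightarrow> q ^ i \<noteq> 1"
begin

abbreviation "Q \<equiv> q^2"

definition pp :: "'a \<Rightarrow> nat \<Rightarrow> 'a" where "pp a k = (\<Prod>j<k. 1 - a * Q^j)"

definition T :: "nat \<Rightarrow> nat \<Rightarrow> 'a" where
  "T m k = pp (1 / Q^m) k * pp (Q^(Suc m)) k / (pp Q k)^2 * Q^k"

lemma Q0: "Q \<noteq> 0" using q0 by simp

lemma Qpow1: "i > 0 \<Longrightarrow> 1 - Q^i \<noteq> 0"
  using qn1[of "2*i"] by (simp add: power_mult)

lemma ppQ_nz: "pp Q k \<noteq> 0"
  unfolding pp_def
proof -
  have "\<forall>j<k. 1 - Q * Q^j \<noteq> 0" using Qpow1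
    by (metis power_Suc zero_less_Suc)
  then show "(\<Prod>j<k. 1 - Q * Q ^ j) \<noteq> 0" by simp
qed

lemma pp_Suc: "pp a (Suc j) = pp a j * (1 - a * Q^j)"
  by (simp add: pp_def)

lemma pp_Suc2: "pp a (Suc j) = (1 - a) * pp (a*Q) j"
  unfolding pp_def by (subst prod.lessThan_Suc_shift) (simp add: mult.assoc power_commutes)

lemma T_vanish: assumes "m < k" shows "T m k = 0"
proof -
  have "pp (1 / Q^m) k = 0" unfolding pp_def
    using assms Q0 by (auto intro!: bexI[of _ m])
  then show ?thesis by (simp add: T_def)
qed

lemma T0: "T m 0 = 1" by (simp add: T_def pp_def)

lemma alg: fixes A B C X y Q :: "'b::field"
  assumes "X - 1 \<noteq> 0" "X \<noteq> 0" "y \<noteq> 0" "C \<noteq> 0" "1 - Q*y \<noteq> 0" "Q \<noteq> 0"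
  shows "A*(1-1/X*y)*(B*(1-X*Q*y))/(C*(1-Q*y))^2*(Q*y) + X*(A*(1-1/X*y)*(1-1/X*(Q*y))/(1-1/X)*((1-X)*B)/(C*(1-Q*y))^2*(Q*y))
   = A*(1-1/X*y)*(B*(1-X*Q*y))/(C*(1-Q*y))^2*(Q*y) * ((X+1)*(X/(Q*y)-1)/(X-1)) - A*B/C^2*y*((X+1)*(X/y-1)/(X-1))"
proof -
  define D where "D = C*(1-Q*y)"
  have D0: "D \<noteq> 0" using assms by (simp add: D_def)
  have r1: "1-1/X*y = (X-y)/X" "1-1/X*(Q*y) = (X-Q*y)/X" "X/(Q*y)-1 = (X-Q*y)/(Q*y)" "X/y-1 = (X-y)/y"
    "(1-X)/(1-1/X) = -X"
    using assms by (auto simp: field_simps D_def)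
  have r6: "1/C^2 = (1-Q*y)^2/D^2" using assms by (simp add: D_def power_mult_distrib)
  define W where "W = X - 1"
  define Z where "Z = 1 - Q*y"
  have W0: "W \<noteq> 0" and Z0: "Z \<noteq> 0" using assms by (auto simp: W_def Z_def)
  have r7: "(1-X)/(1-1/X) = -X" using assms by (simp add: field_simps)
  have main: "A*((X-y)/X)*(B*(1-X*Q*y))/D^2*(Q*y) + X*(A*((X-y)/X)*((X-Q*y)/X)*(-X)*B/D^2*(Q*y))
   = A*((X-y)/X)*(B*(1-X*Q*y))/D^2*(Q*y) * ((X+1)*((X-Q*y)/(Q*y))/W) - A*B*(Z^2/D^2)*y*((X+1)*((X-y)/y)/W)"
  proof -
    have "A*((X-y)/X)*(B*(1-X*Q*y))/D^2*(Q*y) + X*(A*((X-y)/X)*((X-Q*y)/X)*(-X)*B/D^2*(Q*y))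
       = A*B*Q*y*(X-y)*((1-X*Q*y) - X*(X-Q*y)) / (X*D^2)"
      using assms D0 by (simp add: field_simps)
    also have "\<dots> = A*B*(X-y)*(X+1)*((1-X*Q*y)*(X-Q*y) - X*Z^2) / (X*W*D^2)"
      using assms D0 W0 by (simp add: field_simps W_def Z_def) algebra
    also have "\<dots> = A*((X-y)/X)*(B*(1-X*Q*y))/D^2*(Q*y) * ((X+1)*((X-Q*y)/(Q*y))/W) - A*B*(Z^2/D^2)*y*((X+1)*((X-y)/y)/W)"
      using assms D0 W0 by (simp add: field_simps)
    finally show ?thesis .
  qed
  have e2: "A*((X-y)/X)*((X-Q*y)/X)/(1-1/X)*((1-X)*B) = A*((X-y)/X)*((X-Q*y)/X)*(-X)*B"
  proof -
    have g: "\<And>x d c b. (x::'b)/d*(c*b) = x*(c/d)*b" by (simp add: ac_simps)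
    show ?thesis by (subst g) (simp only: r7)
  qed
  have e6: "(1 - Q*y)^2/D^2 = Z^2/D^2" by (simp add: Z_def)
  have e9: "A*B/C^2 = A*B*(Z^2/D^2)" using r6 e6 by (metis times_divide_eq_right mult.right_neutral)
  show ?thesis
    unfolding r1(1,2,3,4) D_def[symmetric] W_def[symmetric]
    apply (simp only: e2 e9)
    using main by simp
qed

lemma step:
  fixes m k :: nat
  defines "X \<equiv> Q^(Suc m)"
  shows "T (Suc m) k + X * T m k =
     T (Suc m) k * ((X+1)*(X/Q^k - 1)/(X-1))
     - (if k = 0 then 0 else T (Suc m) (k-1) * ((X+1)*(X/Q^(k-1) - 1)/(X-1)))"
proof (cases k)
  case 0
  have "X - 1 \<noteq> 0" using Qpow1[of "Suc m"] unfolding X_def by auto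
  then show ?thesis using 0 by (simp add: T0 field_simps)
next
  case (Suc j)
  have X1: "X - 1 \<noteq> 0" using Qpow1[of "Suc m"] unfolding X_def by auto
  have X0: "X \<noteq> 0" unfolding X_def using Q0 by simp
  define A where "A = pp (1/X) j"
  define B where "B = pp (X*Q) j"
  define C where "C = pp Q j"
  define y where "y = Q^j"
  have y0: "y \<noteq> 0" unfolding y_def using Q0 by simp
  have C0: "C \<noteq> 0" unfolding C_def by (rule ppQ_nz)
  have Qy: "1 - Q*y \<noteq> 0" unfolding y_def using Qpow1[of "Suc j"] by simp
  have e1: "1/Q^(Suc m) = 1/X" "Q^Suc (Suc m) = X*Q" "1/Q^m = 1/X*Q" "Q^(Suc j) = Q*y" "Q^(Suc m) = X"
    unfolding X_def y_def using Q0 by (auto simp: field_simps)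
  have h1: "pp (1/X) (Suc j) = A * (1 - 1/X*y)" unfolding A_def y_def by (rule pp_Suc)
  have h2: "pp (X*Q) (Suc j) = B * (1 - X*Q*y)" unfolding B_def y_def by (rule pp_Suc)
  have h3: "pp Q (Suc j) = C * (1 - Q*y)" unfolding C_def y_def by (rule pp_Suc)
  have h5: "pp X (Suc j) = (1 - X) * B" unfolding B_def by (rule pp_Suc2)
  have "pp (1/X) (Suc (Suc j)) = (1 - 1/X) * pp (1/X*Q) (Suc j)" by (rule pp_Suc2)
  moreover have "pp (1/X) (Suc (Suc j)) = A * (1 - 1/X*y) * (1 - 1/X*(Q*y))"
    using h1 pp_Suc[of "1/X" "Suc j"] e1(4) by simp
  moreover have "1 - 1/X \<noteq> 0" using X1 X0 by (auto simp: field_simps)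
  ultimately have h4: "pp (1/X*Q) (Suc j) = A * (1 - 1/X*y) * (1 - 1/X*(Q*y)) / (1 - 1/X)"
    by (auto simp: field_simps)
  have tS: "T (Suc m) (Suc j) = A * (1 - 1/X*y) * (B * (1 - X*Q*y)) / (C * (1 - Q*y))^2 * (Q*y)"
    unfolding T_def e1 h1 h2 h3 by simp
  have tm: "T m (Suc j) = A * (1 - 1/X*y) * (1 - 1/X*(Q*y)) / (1 - 1/X) * ((1 - X) * B) / (C * (1 - Q*y))^2 * (Q*y)"
    unfolding T_def e1 h4 h3 h5 by simp
  have tj: "T (Suc m) j = A * B / C^2 * y"
    unfolding T_def e1 A_def B_def C_def y_def by simp
  have "T (Suc m) (Suc j) + X * T m (Suc j) =
     T (Suc m) (Suc j) * ((X+1)*(X/(Q*y) - 1)/(X-1)) - T (Suc m) j * ((X+1)*(X/y - 1)/(X-1))"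
    unfolding tS tm tj by (rule alg[OF X1 X0 y0 C0 Qy Q0])
  then show ?thesis unfolding Suc by (simp add: e1(4) y_def)
qed

lemma Tsum: "(\<Sum>k<Suc m. T m k) = (-1)^m * q^(m * Suc m)"
proof (induction m)
  case 0
  then show ?case by (simp add: T0)
next
  case (Suc m)
  define X where "X = Q^(Suc m)"
  define H where "H k = (if k = 0 then 0 else T (Suc m) (k-1) * ((X+1)*(X/Q^(k-1) - 1)/(X-1)))" for k
  have st: "T (Suc m) k + X * T m k = H (Suc k) - H k" for k
    using step[of m k] unfolding H_def X_def by simp
  have "(\<Sum>k<Suc (Suc m). T (Suc m) k + X * T m k) = H (Suc (Suc m)) - H 0"
    unfolding st by (rule sum_lessThan_telescope)
  also have "\<dots> = 0" unfolding H_def X_def using Q0 by simp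
  finally have "(\<Sum>k<Suc (Suc m). T (Suc m) k) + X * (\<Sum>k<Suc (Suc m). T m k) = 0"
    by (simp only: sum.distrib sum_distrib_left)
  moreover have "(\<Sum>k<Suc (Suc m). T m k) = (\<Sum>k<Suc m. T m k)"
    using T_vanish[of m "Suc m"] by simp
  ultimately have "(\<Sum>k<Suc (Suc m). T (Suc m) k) = - X * ((-1)^m * q^(m * Suc m))"
    using Suc.IH by (simp add: eq_neg_iff_add_eq_0)
  also have "\<dots> = (-1)^(Suc m) * q^(Suc m * Suc (Suc m))"
  proof -
    have "Suc m * Suc (Suc m) = 2 * Suc m + m * Suc m" by simp
    then show ?thesis unfolding X_def by (simp only: power_add power_mult) simp
  qed
  finally show ?case .
qed

end

section \<open>Polynomial facts\<close>

lemma to_fract_power: "to_fract (x ^ n) = to_fract x ^ n"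
  by (induction n) simp_all

lemma to_fract_prod: "to_fract (prod f A) = prod (\<lambda>x. to_fract (f x)) A"
  by (induction A rule: infinite_finite_induct) simp_all

lemma cpow: "[:c:] ^ n = [:c ^ n:]"
  by (induction n) (simp_all add: mult.commute)

lemma coprime_prod_left:
  fixes f :: "'c \<Rightarrow> bipoly"
  assumes "finite A" "\<forall>x\<in>A. coprime (f x) p"
  shows "coprime (prod f A) p"
  using assms by (induction A rule: finite_induct) (simp_all add: coprime_mult_left_iff)

lemma coprime_const:
  fixes d :: "rat poly"
  assumes "d \<noteq> 0" "coeff p i = 1"
  shows "coprime [:d:] p"
proof (rule coprimeI)
  fix c assume c1: "c dvd [:d:]" and c2: "c dvd p"
  have "degree c \<le> degree [:d:]" using dvd_imp_degree_le[OF c1] assms by simp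
  then have "degree c = 0" by simp
  then obtain e where e: "c = [:e:]" by (elim degree_eq_zeroE) simp
  have "e dvd coeff p i" using c2 unfolding e const_poly_dvd_iff by blast
  then have "is_unit e" using assms by simp
  then show "is_unit c" unfolding e by (simp add: is_unit_const_poly_iff)
qed

abbreviation "xq \<equiv> [:0, 1:] :: rat poly"

lemma var_q_pow: "var_q ^ k = [:xq ^ k:]"
  unfolding var_q_def by (rule cpow)

lemma xq_pow_nz: "xq ^ k \<noteq> 0" by simp

lemma xq_pow_ne1: "k > 0 \<Longrightarrow> xq ^ k \<noteq> 1"
proof
  assume "k > 0" "xq ^ k = 1"
  then have "degree (xq ^ k) = 0" by simp
  moreover have "degree (xq ^ k) = k" using degree_linear_power[of "0::rat" k] by simp
  ultimately show False using \<open>k > 0\<close> by simp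
qed

definition PP :: "nat \<Rightarrow> bipoly" where "PP n = (1 - var_a * var_q^n) * (var_a - var_q^n)"

lemma coeff_f1: "coeff (1 - var_a * var_q^n) 0 = 1"
  by (simp add: var_a_def var_q_pow)

lemma coeff_f2: "coeff (var_a - var_q^n) 1 = 1"
  by (simp add: var_a_def var_q_pow)

lemma coprime_constP: "d \<noteq> 0 \<Longrightarrow> coprime [:d:] (PP n)"
  unfolding PP_def using coprime_const[OF _ coeff_f1] coprime_const[OF _ coeff_f2] by simp

lemma coprime_qpowP: "coprime (var_q ^ k) (PP n)"
  unfolding var_q_pow by (rule coprime_constP) simp

lemma coprime_aP: "coprime var_a (PP n)"
proof -
  have "coprime var_a (1 - var_a * var_q^n)"
  proof (rule coprimeI)
    fix c assume "c dvd var_a" "c dvd 1 - var_a * var_q^n"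
    moreover have "c dvd var_a * var_q^n" using \<open>c dvd var_a\<close> by simp
    ultimately have "c dvd (1 - var_a * var_q^n) + var_a * var_q^n" using dvd_add by blast
    then show "is_unit c" by simp
  qed
  moreover have "coprime var_a (var_a - var_q^n)"
  proof (rule coprimeI)
    fix c assume c1: "c dvd var_a" and "c dvd var_a - var_q^n"
    then have "c dvd var_a - (var_a - var_q^n)" using dvd_diff by blast
    then have c3: "c dvd [:xq^n:]" by (simp add: var_q_pow)
    have "coprime [:xq^n:] var_a" by (rule coprime_const[of _ _ 1]) (simp_all add: var_a_def)
    then show "is_unit c" using c1 c3 coprime_common_divisor by blast
  qed
  ultimately show ?thesis unfolding PP_def by simp
qed

section \<open>Congruences\<close>

definition okP :: "bipoly \<Rightarrow> ratfun \<Rightarrow> bool" where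
  "okP P X \<longleftrightarrow> (\<exists>C D. D \<noteq> 0 \<and> coprime D P \<and> X = to_fract C / to_fract D)"

definition cg :: "bipoly \<Rightarrow> ratfun \<Rightarrow> ratfun \<Rightarrow> bool" where
  "cg P X Y \<longleftrightarrow> (\<exists>Z. okP P Z \<and> X - Y = to_fract P * Z)"

lemma ok_frac: "D \<noteq> 0 \<Longrightarrow> coprime D P \<Longrightarrow> okP P (to_fract C / to_fract D)"
  unfolding okP_def by blast

lemma ok_poly: "okP P (to_fract C)"
  using ok_frac[of 1 P C] by simp

lemma ok_add: assumes "okP P X" "okP P Y" shows "okP P (X + Y)"
proof -
  obtain C1 D1 where 1: "D1 \<noteq> 0" "coprime D1 P" "X = to_fract C1 / to_fract D1" using assms(1) okP_def by blast
  obtain C2 D2 where 2: "D2 \<noteq> 0" "coprime D2 P" "Y = to_fract C2 / to_fract D2" using assms(2) okP_def by blast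
  have "X + Y = to_fract (C1*D2 + C2*D1) / to_fract (D1*D2)" using 1 2 by (simp add: field_simps)
  then show ?thesis using 1 2 ok_frac[of "D1*D2" P "C1*D2 + C2*D1"] by (simp add: coprime_mult_left_iff)
qed

lemma ok_mult: assumes "okP P X" "okP P Y" shows "okP P (X * Y)"
proof -
  obtain C1 D1 where 1: "D1 \<noteq> 0" "coprime D1 P" "X = to_fract C1 / to_fract D1" using assms(1) okP_def by blast
  obtain C2 D2 where 2: "D2 \<noteq> 0" "coprime D2 P" "Y = to_fract C2 / to_fract D2" using assms(2) okP_def by blast
  have "X * Y = to_fract (C1*C2) / to_fract (D1*D2)" using 1 2 by (simp add: field_simps)
  then show ?thesis using 1 2 ok_frac[of "D1*D2" P "C1*C2"] by (simp add: coprime_mult_left_iff)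
qed

lemma ok_uminus: assumes "okP P X" shows "okP P (- X)"
proof -
  have "- X = to_fract (-1) * X" by simp
  then show ?thesis using ok_mult[OF ok_poly assms] by metis
qed

lemma ok_diff: "okP P X \<Longrightarrow> okP P Y \<Longrightarrow> okP P (X - Y)"
  using ok_add[OF _ ok_uminus] by (metis diff_conv_add_uminus)

lemma ok_prod: "(\<And>x. x \<in> A \<Longrightarrow> okP P (f x)) \<Longrightarrow> okP P (prod f A)"
proof (induction A rule: infinite_finite_induct)
  case (infinite A) then show ?case using ok_poly[of P 1] by simp
next
  case empty then show ?case using ok_poly[of P 1] by simp
next
  case (insert x F) then show ?case by (simp add: ok_mult)
qed

lemma cg_sum: "(\<And>x. x \<in> A \<Longrightarrow> cg P (f x) (g x)) \<Longrightarrow> cg P (sum f A) (sum g A)"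
proof (induction A rule: infinite_finite_induct)
  case (infinite A) then show ?case using ok_poly[of P 0] by (auto simp: cg_def)
next
  case empty then show ?case using ok_poly[of P 0] by (auto simp: cg_def)
next
  case (insert x F)
  then obtain Z1 Z2 where "okP P Z1" "f x - g x = to_fract P * Z1" "okP P Z2" "sum f F - sum g F = to_fract P * Z2"
    unfolding cg_def by blast
  then show ?case using insert unfolding cg_def
    by (intro exI[of _ "Z1 + Z2"]) (auto simp: ok_add algebra_simps)
qed

lemma cg_mult_right: assumes "cg P X Y" "okP P W" shows "cg P (X * W) (Y * W)"
proof -
  obtain Z where z: "okP P Z" "X - Y = to_fract P * Z" using assms(1) cg_def by blast
  have "X * W - Y * W = to_fract P * (Z * W)" using z(2) by (metis left_diff_distrib mult.assoc)
  then show ?thesis unfolding cg_def using ok_mult[OF z(1) assms(2)] by blast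
qed

lemma cg_mult:
  assumes "cg P X1 Y1" "cg P X2 Y2" "okP P X1" "okP P Y2"
  shows "cg P (X1 * X2) (Y1 * Y2)"
proof -
  obtain Z1 Z2 where z: "okP P Z1" "X1 - Y1 = to_fract P * Z1" "okP P Z2" "X2 - Y2 = to_fract P * Z2"
    using assms unfolding cg_def by blast
  have "X1 * X2 - Y1 * Y2 = X1 * (X2 - Y2) + (X1 - Y1) * Y2" by (simp add: algebra_simps)
  also have "\<dots> = to_fract P * (X1 * Z2 + Z1 * Y2)" using z by (simp add: algebra_simps)
  finally show ?thesis unfolding cg_def using z assms by (blast intro: ok_add ok_mult)
qed

lemma cg_prod:
  assumes "\<And>x. x \<in> A \<Longrightarrow> cg P (f x) (g x)" "\<And>x. x \<in> A \<Longrightarrow> okP P (f x)" "\<And>x. x \<in> A \<Longrightarrow> okP P (g x)"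
  shows "cg P (prod f A) (prod g A)"
  using assms
proof (induction A rule: infinite_finite_induct)
  case (infinite A) then show ?case using ok_poly[of P 0] by (auto simp: cg_def)
next
  case empty then show ?case using ok_poly[of P 0] by (auto simp: cg_def)
next
  case (insert x F)
  then show ?case by (simp add: cg_mult ok_prod)
qed

lemma cg_qcong: assumes "cg P A B" shows "qcong A B P"
proof -
  obtain C D where "D \<noteq> 0" "coprime D P" "A - B = to_fract P * (to_fract C / to_fract D)"
    using assms unfolding cg_def okP_def by blast
  then show ?thesis unfolding qcong_def by (intro exI[of _ C] exI[of _ D]) simp
qed


lemma to_fract_var_q_pow: "fq ^ i = to_fract (var_q ^ i)"
  by (simp add: fq_def to_fract_power)

lemma var_q_ne0: "var_q ^ i \<noteq> 0" by (simp add: var_q_pow)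
lemma var_a_ne0: "var_a \<noteq> 0" by (simp add: var_a_def)

lemma fq_ne0: "fq \<noteq> 0" using var_q_ne0[of 1] by (simp add: fq_def)
lemma fa_ne0: "fa \<noteq> 0" using var_a_ne0 by (simp add: fa_def)

lemma fq_pow_ne1: assumes "i > 0" shows "fq ^ i \<noteq> 1"
proof
  assume "fq ^ i = 1"
  then have "var_q ^ i = 1" unfolding to_fract_var_q_pow by (metis to_fract_1 to_fract_eq_iff)
  then have "[:xq ^ i:] = [:1:]" by (simp add: var_q_pow)
  then show False using xq_pow_ne1[OF assms] by simp
qed

interpretation Z: qf fq
  by (rule qf.intro) (auto simp: fq_ne0 fq_pow_ne1)

lemma coprime_qP: "coprime var_q (PP n)" using coprime_qpowP[of 1] by simp
lemma var_q_ne0': "var_q \<noteq> 0" using var_q_ne0[of 1] by simp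

lemma fl: fixes a s r :: "'b::field"
  assumes "a \<noteq> 0" "s \<noteq> 0"
  shows "(1 - a*r)*(1 - r/a) - (1 - s*r)*(1 - r/s) = (1 - a*s)*(a - s)*(r/(a*s))"
  using assms by (simp add: field_simps)

lemma ok_qa: "okP (PP n) (fq^i / fa)"
  unfolding to_fract_var_q_pow fa_def by (rule ok_frac[OF var_a_ne0 coprime_aP])

lemma ok_qq: "okP (PP n) (fq^i / fq^k)"
  unfolding to_fract_var_q_pow by (rule ok_frac[OF var_q_ne0 coprime_qpowP])

lemma ok_qp: "okP (PP n) (fq^i)"
  unfolding to_fract_var_q_pow by (rule ok_poly)

lemma ok_a: "okP (PP n) fa"
  unfolding fa_def by (rule ok_poly)

lemma ok_1: "okP P 1" using ok_poly[of P 1] by simp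

lemma cgF: "cg (PP n) ((1 - fa*fq^(2*j+1))*(1 - fq^(2*j+1)/fa)) ((1 - fq^n*fq^(2*j+1))*(1 - fq^(2*j+1)/fq^n))"
proof -
  have tP: "to_fract (PP n) = (1 - fa*fq^n)*(fa - fq^n)"
    by (simp add: PP_def fa_def to_fract_var_q_pow)
  have "okP (PP n) (fq^(2*j+1) / (fa*fq^n))"
    unfolding to_fract_var_q_pow fa_def to_fract_mult[symmetric]
    by (rule ok_frac) (simp_all add: var_a_ne0 var_q_ne0 var_q_ne0' coprime_aP coprime_qP coprime_mult_left_iff)
  moreover have "(1 - fa*fq^(2*j+1))*(1 - fq^(2*j+1)/fa) - (1 - fq^n*fq^(2*j+1))*(1 - fq^(2*j+1)/fq^n)
     = to_fract (PP n) * (fq^(2*j+1) / (fa*fq^n))"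
    unfolding tP by (rule fl) (simp_all add: fa_ne0 fq_ne0)
  ultimately show ?thesis unfolding cg_def by blast
qed

lemma qpochQ: "qpoch (fq^2) (fq^2) k = Z.pp (fq^2) k"
  by (simp add: qpoch_def Z.pp_def)

lemma Dk: "qpoch (fq^2) (fq^2) k = to_fract (\<Prod>j<k. 1 - var_q^(2*j+2))"
proof -
  have "1 - fq^2*(fq^2)^j = to_fract (1 - var_q^(2*j+2))" for j
  proof -
    have "fq^2*(fq^2)^j = fq^(2*j+2)" by (simp add: power_mult[symmetric] power_add[symmetric] algebra_simps)
    then show ?thesis by (simp only: to_fract_diff to_fract_1 to_fract_var_q_pow)
  qed
  then show ?thesis unfolding qpoch_def to_fract_prod by simp
qed

lemma ok_W: "okP (PP n) (fq^(2*k) / (qpoch (fq^2) (fq^2) k)^2)"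
proof -
  define D where "D = (\<Prod>j<k. 1 - var_q^(2*j+2))"
  have "to_fract D \<noteq> 0" using Z.ppQ_nz[of k] Dk[of k] qpochQ[of k] unfolding D_def by metis
  then have D0: "D \<noteq> 0" by auto
  have "coprime D (PP n)" unfolding D_def
  proof (rule coprime_prod_left, simp, intro ballI)
    fix j
    have "1 - var_q^(2*j+2) = [:1 - xq^(2*j+2):]" by (simp only: var_q_pow one_pCons diff_pCons diff_self)
    moreover have "1 - xq^(2*j+2) \<noteq> 0" using xq_pow_ne1[of "2*j+2"] by simp
    ultimately show "coprime (1 - var_q^(2*j+2)) (PP n)" using coprime_constP by simp
  qed
  then show ?thesis unfolding Dk unfolding D_def[symmetric] to_fract_var_q_pow to_fract_power[symmetric]
    by (intro ok_frac) (simp_all add: D0)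
qed

theorem corollary4p3:
  fixes n :: nat
  assumes "n > 0" and "odd n"
  shows "qcong
    (\<Sum>k<n. qpoch (fa * fq) (fq^2) k * qpoch (fq / fa) (fq^2) k
              / (qpoch (fq^2) (fq^2) k)^2 * fq^(2*k))
    ((-1)^((n - 1) div 2) * fq^((n^2 - 1) div 4))
    ((1 - var_a * var_q^n) * (var_a - var_q^n))"
proof -
  obtain m where n: "n = 2*m+1" using assms(2) oddE by blast
  define F where "F j = (1 - fa*fq^(2*j+1))*(1 - fq^(2*j+1)/fa)" for j
  define G where "G j = (1 - fq^n*fq^(2*j+1))*(1 - fq^(2*j+1)/fq^n)" for j
  define W where "W k = fq^(2*k) / (qpoch (fq^2) (fq^2) k)^2" for k
  have sF: "qpoch (fa * fq) (fq^2) k * qpoch (fq / fa) (fq^2) k / (qpoch (fq^2) (fq^2) k)^2 * fq^(2*k)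
      = (\<Prod>j<k. F j) * W k" for k
  proof -
    have "qpoch (fa * fq) (fq^2) k * qpoch (fq / fa) (fq^2) k = (\<Prod>j<k. F j)"
      unfolding qpoch_def F_def prod.distrib[symmetric]
      by (intro prod.cong refl) (simp add: power_mult[symmetric] algebra_simps)
    then show ?thesis unfolding W_def by simp
  qed
  have okF: "okP (PP n) (F j)" for j
    unfolding F_def
    by (intro ok_mult ok_diff ok_1 ok_a ok_qp ok_qa)
  have okG: "okP (PP n) (G j)" for j
    unfolding G_def
    by (intro ok_mult ok_diff ok_1 ok_a ok_qp ok_qq)
  have okW: "okP (PP n) (W k)" for k unfolding W_def by (rule ok_W)
  have c1: "cg (PP n) (\<Sum>k<n. (\<Prod>j<k. F j) * W k) (\<Sum>k<n. (\<Prod>j<k. G j) * W k)"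
    by (intro cg_sum cg_mult_right cg_prod okF okG okW) (unfold F_def G_def, rule cgF)
  have GT: "(\<Prod>j<k. G j) * W k = Z.T m k" for k
  proof -
    have "(\<Prod>j<k. G j) = Z.pp (1 / (fq^2)^m) k * Z.pp ((fq^2)^Suc m) k"
      unfolding Z.pp_def prod.distrib[symmetric] G_def
    proof (intro prod.cong refl)
      fix j
      have e1: "fq^n*fq^(2*j+1) = (fq^2)^Suc m * (fq^2)^j"
        unfolding n power_mult[symmetric] power_add[symmetric] by (simp add: algebra_simps)
      have e2: "fq^(2*j+1)/fq^n = 1 / (fq^2)^m * (fq^2)^j"
        unfolding n power_mult[symmetric] using fq_ne0 by (simp add: power_add)
      show "(1 - fq^n*fq^(2*j+1))*(1 - fq^(2*j+1)/fq^n) = (1 - 1 / (fq^2)^m * (fq^2)^j) * (1 - (fq^2)^Suc m * (fq^2)^j)"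
        unfolding e1 e2 by simp
    qed
    then show ?thesis unfolding W_def Z.T_def qpochQ by (simp add: power_mult)
  qed
  have "(\<Sum>k<n. Z.T m k) = (\<Sum>k<Suc m. Z.T m k)"
    by (rule sum.mono_neutral_right) (auto simp: n Z.T_vanish)
  also have "\<dots> = (-1)^m * fq^(m * Suc m)" by (rule Z.Tsum)
  also have "\<dots> = (-1)^((n - 1) div 2) * fq^((n^2 - 1) div 4)"
  proof -
    have "n^2 = 4 * (m * Suc m) + 1" unfolding n by (simp add: power2_eq_square algebra_simps)
    then have "(n^2 - 1) div 4 = m * Suc m" by simp
    moreover have "(n - 1) div 2 = m" unfolding n by simp
    ultimately show ?thesis by simp
  qed
  finally have c2: "(\<Sum>k<n. (\<Prod>j<k. G j) * W k) = (-1)^((n - 1) div 2) * fq^((n^2 - 1) div 4)"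
    using GT by simp
  have "cg (PP n) (\<Sum>k<n. qpoch (fa * fq) (fq^2) k * qpoch (fq / fa) (fq^2) k
              / (qpoch (fq^2) (fq^2) k)^2 * fq^(2*k)) ((-1)^((n - 1) div 2) * fq^((n^2 - 1) div 4))"
    using c1 unfolding sF c2 .
  then show ?thesis unfolding PP_def by (rule cg_qcong)
qed

end
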